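(* Let $c\ge 1$ be an integer and $\lambda,\mu,\alpha>0$ with $\rho:=\lambda/(c\mu)<1$. Let $(C,N)$ have the stationary distribution $(\pi_{i,j})$ of the continuous-time Markov chain on $\mathcal S=\{(i,j):0\le i\le c,\ j\ge i\}$ whose only transitions are: $(i,j)\to(i,j+1)$ at rate $\lambda$; $(i,j)\to(i+1,j)$ at rate $\min(j-i,c-i)\alpha$ for $i<c$, $j>i$; $(i,j)\to(i,j-1)$ at rate $i\mu$ for $i\ge1$, $j>i$; $(i,i)\to(i-1,i-1)$ at rate $i\mu$ for $i\ge 1$. Let $Q^{(c)}$ be a random variable with $\mathbb P(Q^{(c)}=k)=\mathbb P(N=c+k\mid C=c)$, $k\ge0$, and let $P_c(z)=\mathbb E[z^{Q^{(c)}}]$. Let $M=\sum_{k\ge1}k\,\pi_{c-1,c-1+k}$ and $p_{c-1,i}=\frac{1}{M}\sum_{k\ge i+1}\pi_{c-1,c-1+k}$ for $i\ge0$. Then $(p_{c-1,i})_{i\ge0}$ is a probability distribution and, for $|z|\le1$, $$P_c(z)=\left(\sum_{i=0}^\infty p_{c-1,i}z^i\right)\frac{1-\rho}{1-\rho z}.$$ Equivalently, $Q^{(c)}$ has the same distribution as $Q_{ON\text{-}IDLE}+Q_{Res}$, where $Q_{ON\text{-}IDLE}$ and $Q_{Res}$ are independent, $\mathbb P(Q_{ON\text{-}IDLE}=n)=(1-\rho)\rho^n$ ($n\ge0$), and $\mathbb P(Q_{Res}=i)=p_{c-1,i}$ ($i\ge0$).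
   Context: The chain models an M/M/$c$ queue with setup times under the ON-OFF policy: $C$ is the number of busy servers and $N$ the number of jobs in the system in steady state; arrivals Poisson($\lambda$), services exp($\mu$), setups exp($\alpha$). Note $p_{c-1,i}=\mathbb P(N-C>i\mid C=c-1)/\mathbb E[N-C\mid C=c-1]$. *)

theory Defs
  imports "HOL-Analysis.Analysis"
begin

text \<open>State space of the M/M/c setup-time chain: states (i,j) with 0 <= i <= c, j >= i,
  where i = number of busy servers, j = number of jobs.\<close>
definition setup_states :: "nat \<Rightarrow> (nat \<times> nat) set" where
  "setup_states c = {(i, j). i \<le> c \<and> i \<le> j}"

definition setup_rate :: "nat \<Rightarrow> real \<Rightarrow> real \<Rightarrow> real \<Rightarrow> nat \<times> nat \<Rightarrow> nat \<times> nat \<Rightarrow> real" where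
  "setup_rate c lam mu alpha s t =
     (case s of (i, j) \<Rightarrow> case t of (i', j') \<Rightarrow>
        (if i' = i \<and> j' = j + 1 then lam else 0)
      + (if i < c \<and> i < j \<and> i' = i + 1 \<and> j' = j then real (min (j - i) (c - i)) * alpha else 0)
      + (if 1 \<le> i \<and> i < j \<and> i' = i \<and> j' = j - 1 then real i * mu else 0)
      + (if 1 \<le> i \<and> j = i \<and> i' = i - 1 \<and> j' = i - 1 then real i * mu else 0))"

definition setup_stationary :: "nat \<Rightarrow> real \<Rightarrow> real \<Rightarrow> real \<Rightarrow> (nat \<times> nat \<Rightarrow> real) \<Rightarrow> bool" where
  "setup_stationary c lam mu alpha st \<longleftrightarrow>
     (\<forall>s\<in>setup_states c. 0 \<le> st s) \<and>
     (st has_sum 1) (setup_states c) \<and>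
     (\<forall>t\<in>setup_states c.
        st t * (\<Sum>\<^sub>\<infinity>u\<in>setup_states c - {t}. setup_rate c lam mu alpha t u)
        = (\<Sum>\<^sub>\<infinity>s\<in>setup_states c - {t}. st s * setup_rate c lam mu alpha s t))"

end

theory Submission
  imports Defs
begin


lemma seq_D_zero:
  fixes a b :: "nat \<Rightarrow> real" and lam r al :: real
  assumes sa: "summable a" and sb: "summable b"
    and bal0: "(lam + r) * a 0 = al * b 1 + r * a 1"
    and balS: "\<And>k. (lam + r) * a (Suc k) = lam * a k + al * b (k+2) + r * a (k+2)"
  shows "\<And>k. r * a k = (if k = 0 then 0 else lam * a (k - 1)) + al * (\<Sum>m. b (m + k + 1))"
proof -
  define T where "T k = (\<Sum>m. b (m + k + 1))" for k
  have Tstep: "T k = b (k+1) + T (k+1)" for k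
  proof -
    have s: "summable (\<lambda>m. b (m + k + 1))" using summable_ignore_initial_segment[OF sb, of "k+1"] by (simp add: add.assoc)
    have "T (k+1) = (\<Sum>m. b (Suc m + k + 1))" by (simp add: T_def add.commute add.left_commute)
    also have "\<dots> = T k - b (k+1)" unfolding T_def using suminf_split_head[OF s] by simp
    finally show ?thesis by simp
  qed
  define D where "D k = r * a k - (if k = 0 then 0 else lam * a (k - 1)) - al * T k" for k
  have D1: "D (Suc k) = D k" for k
  proof (cases k)
    case 0
    then show ?thesis using bal0 Tstep[of 0] by (simp add: D_def algebra_simps)
  next
    case (Suc j)
    then show ?thesis using balS[of j] Tstep[of "Suc j"] by (simp add: D_def algebra_simps)
  qed
  have Dc: "D k = D 0" for k by (induction k) (use D1 in auto)
  have Tlim: "T \<longlonglongrightarrow> 0"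
  proof -
    have eq: "T k = suminf b - sum b {..<Suc k}" for k
      using suminf_split_initial_segment[OF sb, of "Suc k"] by (simp add: T_def add.commute add.left_commute)
    have "(\<lambda>k. sum b {..<Suc k}) \<longlonglongrightarrow> suminf b"
      using summable_LIMSEQ[OF sb] by (rule LIMSEQ_Suc)
    hence "(\<lambda>k. suminf b - sum b {..<Suc k}) \<longlonglongrightarrow> suminf b - suminf b"
      by (intro tendsto_intros)
    moreover have "(\<lambda>k. suminf b - sum b {..<Suc k}) = T" using eq by (simp add: fun_eq_iff)
    ultimately show ?thesis by simp
  qed
  have alim: "a \<longlonglongrightarrow> 0" by (rule summable_LIMSEQ_zero[OF sa])
  have a1: "(\<lambda>k. a (Suc k - 1)) \<longlonglongrightarrow> 0" using alim by simp
  have "(\<lambda>k. D (Suc k)) \<longlonglongrightarrow> r * 0 - lam * 0 - al * 0"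
    unfolding D_def using LIMSEQ_Suc[OF alim] LIMSEQ_Suc[OF Tlim] a1
    by (simp only: nat.distinct if_False) (intro tendsto_intros)
  hence "(\<lambda>k. D 0) \<longlonglongrightarrow> 0" using Dc[of "Suc _"] by (simp only:) simp
  hence "D 0 = 0" by (simp add: LIMSEQ_const_iff)
  thus "\<And>k. r * a k = (if k = 0 then 0 else lam * a (k - 1)) + al * (\<Sum>m. b (m + k + 1))"
  proof -
    fix k
    have "D k = 0" using Dc \<open>D 0 = 0\<close> by simp
    thus "r * a k = (if k = 0 then 0 else lam * a (k - 1)) + al * (\<Sum>m. b (m + k + 1))"
      unfolding D_def T_def by linarith
  qed
qed


lemma seq_main:
  fixes a b :: "nat \<Rightarrow> real" and lam r al :: real
  assumes a0: "\<And>k. 0 \<le> a k" and b0: "\<And>k. 0 \<le> b k"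
    and sa: "summable a" and sb: "summable b"
    and lp: "0 < lam" and lr: "lam < r" and alp: "0 < al"
    and rec: "\<And>k. r * a k = (if k = 0 then 0 else lam * a (k - 1)) + al * (\<Sum>m. b (m + k + 1))"
    and nz: "\<exists>k. a k \<noteq> 0"
  defines "T \<equiv> (\<lambda>k. (\<Sum>m. b (m + k + 1)))"
    and "M \<equiv> (\<Sum>m. real (m+1) * b (m+1))"
  shows "summable (\<lambda>m. real (m+1) * b (m+1))" and "M > 0" and "(\<lambda>i. T i / M) sums 1"
    and "\<And>k. a k / suminf a = (\<Sum>n\<le>k. (1 - lam / r) * (lam / r) ^ n * (T (k - n) / M))"
    and "suminf a > 0"
proof -
  have rp: "r > 0" using lp lr by linarith
  have sT: "summable (\<lambda>m. b (m + k + 1))" for k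
    using summable_ignore_initial_segment[OF sb, of "k+1"] by (simp add: add.assoc)
  have T0: "T k \<ge> 0" for k unfolding T_def by (rule suminf_nonneg[OF sT]) (simp add: b0)
  have Tstep: "T k = b (k+1) + T (k+1)" for k
  proof -
    have "T (k+1) = (\<Sum>m. b (Suc m + k + 1))" by (simp add: T_def add.commute add.left_commute)
    also have "\<dots> = T k - b (k+1)" unfolding T_def using suminf_split_head[OF sT[of k]] by simp
    finally show ?thesis by simp
  qed
  define a' where "a' k = (if k = 0 then 0 else a (k - 1))" for k
  have sa': "summable a'"
  proof -
    have "summable (\<lambda>k. a' (Suc k))" using sa by (simp add: a'_def)
    thus ?thesis by (simp add: summable_Suc_iff)
  qed
  have suma': "suminf a' = suminf a"
    using suminf_split_head[OF sa'] by (simp add: a'_def)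
  have Teq: "T k = (r * a k - lam * a' k) / al" for k
    using rec[of k] alp by (simp add: T_def a'_def field_simps)
  have Tfun: "T = (\<lambda>k. (r * a k - lam * a' k) / al)" using Teq by (simp add: fun_eq_iff)
  have sTT: "summable T"
  proof -
    have "summable (\<lambda>k. (r * a k - lam * a' k) / al)"
      by (intro summable_divide summable_diff summable_mult sa sa')
    with Tfun show ?thesis by simp
  qed
  have sumT: "suminf T = (r - lam) * suminf a / al"
  proof -
    have "suminf T = (\<Sum>k. (r * a k - lam * a' k) / al)" by (simp only: Tfun)
    also have "\<dots> = (r * suminf a - lam * suminf a') / al"
    proof -
      have s1: "summable (\<lambda>k. r * a k)" "summable (\<lambda>k. lam * a' k)"
        by (intro summable_mult sa sa')+
      have "(\<Sum>k. (r * a k - lam * a' k) / al) = (\<Sum>k. r * a k - lam * a' k) / al"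
        by (rule suminf_divide, intro summable_diff s1)
      also have "(\<Sum>k. r * a k - lam * a' k) = (\<Sum>k. r * a k) - (\<Sum>k. lam * a' k)"
        by (rule suminf_diff[OF s1, symmetric])
      also have "\<dots> = r * suminf a - lam * suminf a'"
        by (simp add: suminf_mult sa sa')
      finally show ?thesis .
    qed
    finally show ?thesis by (simp add: suma' algebra_simps)
  qed
  have Apos: "suminf a > 0"
  proof -
    have "suminf a \<ge> 0" by (rule suminf_nonneg[OF sa a0])
    moreover have "suminf a \<noteq> 0" using suminf_eq_zero_iff[OF sa a0] nz by blast
    ultimately show ?thesis by linarith
  qed
  thus "suminf a > 0" .
  define e where "e m = real (m+1) * b (m+1)" for m
  have Me: "M = suminf e" unfolding M_def e_def[abs_def] ..
  have e0: "e m \<ge> 0" for m by (simp add: e_def b0)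
  have part: "(\<Sum>i<n. T i) = (\<Sum>m<n. e m) + real n * T n" for n
  proof (induction n)
    case 0 then show ?case by simp
  next
    case (Suc n)
    then show ?case using Tstep[of n] by (simp add: e_def algebra_simps)
  qed
  have part_le: "(\<Sum>m<n. e m) \<le> suminf T" for n
  proof -
    have "(\<Sum>m<n. e m) \<le> (\<Sum>i<n. T i)" using part[of n] T0[of n] by simp
    also have "\<dots> \<le> suminf T" by (rule sum_le_suminf[OF sTT]) (auto simp: T0)
    finally show ?thesis .
  qed
  have se: "summable e" by (rule summableI_nonneg_bounded[OF e0 part_le])
  thus "summable (\<lambda>m. real (m+1) * b (m+1))" by (simp add: e_def[abs_def])
  have tail: "real n * T n \<le> (\<Sum>j. e (j + n))" for n
  proof -
    have "real n * T n = (\<Sum>j. real n * b (j + n + 1))"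
      unfolding T_def by (rule suminf_mult[OF sT, symmetric])
    also have "\<dots> \<le> (\<Sum>j. e (j + n))"
    proof (rule suminf_le)
      show "summable (\<lambda>j. real n * b (j + n + 1))" by (rule summable_mult[OF sT])
      show "summable (\<lambda>j. e (j + n))" using summable_ignore_initial_segment[OF se] .
      fix j show "real n * b (j + n + 1) \<le> e (j + n)"
        unfolding e_def by (intro mult_right_mono) (auto simp: b0 add.commute)
    qed
    finally show ?thesis .
  qed
  have MT: "M = suminf T"
  proof (rule antisym)
    show "M \<le> suminf T" unfolding Me using suminf_le_const[OF se part_le] .
    show "suminf T \<le> M"
    proof (rule suminf_le_const[OF sTT])
      fix n
      have "(\<Sum>i<n. T i) \<le> (\<Sum>m<n. e m) + (\<Sum>j. e (j + n))" using part[of n] tail[of n] by simp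
      also have "\<dots> = suminf e" using suminf_split_initial_segment[OF se, of n] by simp
      finally show "(\<Sum>i<n. T i) \<le> M" by (simp add: Me)
    qed
  qed
  have Mv: "M = (r - lam) * suminf a / al" using MT sumT by simp
  have Mpos: "M > 0" unfolding Mv using lr alp Apos by (intro divide_pos_pos mult_pos_pos) auto
  thus "M > 0" .
  show "(\<lambda>i. T i / M) sums 1"
  proof -
    have "T sums M" using MT sTT by (simp add: summable_sums)
    hence "(\<lambda>i. T i / M) sums (M / M)" by (rule sums_divide)
    thus ?thesis using Mpos by simp
  qed
  have arec: "a k = (\<Sum>n\<le>k. (lam / r) ^ n * (al / r) * T (k - n))" for k
  proof (induction k)
    case 0 then show ?case using rec[of 0] rp by (simp add: T_def field_simps)
  next
    case (Suc k)
    have "a (Suc k) = (lam / r) * a k + (al / r) * T (Suc k)"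
      using rec[of "Suc k"] rp by (simp add: T_def field_simps)
    also have "\<dots> = (\<Sum>n\<le>k. (lam / r) ^ Suc n * (al / r) * T (k - n)) + (al / r) * T (Suc k)"
      by (simp add: Suc sum_distrib_left mult.assoc)
    also have "\<dots> = (\<Sum>n\<le>Suc k. (lam / r) ^ n * (al / r) * T (Suc k - n))"
      by (subst sum.atMost_Suc_shift) simp
    finally show ?case .
  qed
  fix k
  have "a k / suminf a = (\<Sum>n\<le>k. (lam / r) ^ n * (al / r) * T (k - n)) / suminf a" by (simp add: arec)
  also have "\<dots> = (\<Sum>n\<le>k. (1 - lam / r) * (lam / r) ^ n * (T (k - n) / M))"
    unfolding sum_divide_distrib
  proof (rule sum.cong[OF refl])
    fix n
    have "(al / r) / suminf a = (1 - lam / r) / M"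
      using rp alp Apos lr unfolding Mv by (simp add: field_simps)
    thus "(lam / r) ^ n * (al / r) * T (k - n) / suminf a = (1 - lam / r) * (lam / r) ^ n * (T (k - n) / M)"
      by (metis (no_types, lifting) mult.commute mult.left_commute times_divide_eq_left times_divide_eq_right)
  qed
  finally show "a k / suminf a = (\<Sum>n\<le>k. (1 - lam / r) * (lam / r) ^ n * (T (k - n) / M))" .
qed


lemma genfun:
  fixes P q :: "nat \<Rightarrow> real" and \<rho> :: real and z :: complex
  assumes r0: "0 \<le> \<rho>" and r1: "\<rho> < 1" and nz: "norm z \<le> 1"
    and q0: "\<And>i. 0 \<le> q i" and sq: "summable q"
    and P: "\<And>k. P k = (\<Sum>n\<le>k. (1 - \<rho>) * \<rho> ^ n * q (k - n))"
  shows "(\<Sum>\<^sub>\<infinity>k. of_real (P k) * z ^ k) = (\<Sum>\<^sub>\<infinity>i. of_real (q i) * z ^ i) * (1 - of_real \<rho>) / (1 - of_real \<rho> * z)"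
proof -
  define g where "g n = of_real ((1 - \<rho>) * \<rho> ^ n) * z ^ n" for n
  define f where "f i = of_real (q i) * z ^ i" for i
  have ng: "norm (g n) \<le> (1 - \<rho>) * \<rho> ^ n" for n
  proof -
    have "norm (g n) = \<bar>(1 - \<rho>) * \<rho> ^ n\<bar> * norm z ^ n"
      unfolding g_def by (simp only: norm_mult norm_power norm_of_real)
    also have "\<dots> = ((1 - \<rho>) * \<rho> ^ n) * norm z ^ n" using r0 r1 by simp
    also have "\<dots> \<le> (1 - \<rho>) * \<rho> ^ n"
      by (rule mult_left_le) (use r0 r1 nz in \<open>auto intro: power_le_one\<close>)
    finally show ?thesis .
  qed
  have nf: "norm (f n) \<le> q n" for n
    unfolding f_def using q0 nz by (auto simp: norm_mult norm_power intro!: mult_left_le power_le_one)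
  have sgr: "summable (\<lambda>n. (1 - \<rho>) * \<rho> ^ n)" using r0 r1 by (intro summable_mult) simp
  have sg: "summable (\<lambda>n. norm (g n))" by (rule summable_comparison_test'[OF sgr]) (use ng in auto)
  have sf: "summable (\<lambda>n. norm (f n))" by (rule summable_comparison_test'[OF sq]) (use nf in auto)
  have prod: "(\<lambda>k. \<Sum>i\<le>k. g i * f (k - i)) sums (suminf g * suminf f)"
    by (rule Cauchy_product_sums[OF sg sf])
  have eqk: "(\<Sum>i\<le>k. g i * f (k - i)) = of_real (P k) * z ^ k" for k
  proof -
    have "(\<Sum>i\<le>k. g i * f (k - i)) = (\<Sum>i\<le>k. of_real ((1 - \<rho>) * \<rho> ^ i * q (k - i)) * z ^ k)"
      by (rule sum.cong[OF refl]) (auto simp: g_def f_def power_add[symmetric])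
    also have "\<dots> = of_real (P k) * z ^ k" by (simp add: P sum_distrib_right)
    finally show ?thesis .
  qed
  have sP: "summable P"
  proof -
    have "summable (\<lambda>n. norm ((1 - \<rho>) * \<rho> ^ n))" using sgr r0 r1 by simp
    moreover have "summable (\<lambda>n. norm (q n))" using sq q0 by simp
    ultimately have "summable (\<lambda>k. \<Sum>i\<le>k. ((1 - \<rho>) * \<rho> ^ i) * q (k - i))"
      by (rule summable_Cauchy_product)
    moreover have "P = (\<lambda>k. \<Sum>i\<le>k. ((1 - \<rho>) * \<rho> ^ i) * q (k - i))" using P by (simp add: fun_eq_iff)
    ultimately show ?thesis by simp
  qed
  have P0: "P k \<ge> 0" for k unfolding P using r0 r1 q0 by (intro sum_nonneg mult_nonneg_nonneg) auto
  have nP: "summable (\<lambda>k. norm (of_real (P k) * z ^ k))"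
    by (rule summable_comparison_test'[OF sP]) (use P0 nz in \<open>auto simp: norm_mult norm_power intro!: mult_left_le power_le_one\<close>)
  have "((\<lambda>k. of_real (P k) * z ^ k) has_sum (suminf g * suminf f)) UNIV"
    using norm_summable_imp_has_sum[OF nP] prod eqk by simp
  hence L: "(\<Sum>\<^sub>\<infinity>k. of_real (P k) * z ^ k) = suminf g * suminf f" by (rule infsumI)
  have "(f has_sum suminf f) UNIV" using norm_summable_imp_has_sum[OF sf] summable_norm_cancel[OF sf]
    by (simp add: summable_sums)
  hence R: "(\<Sum>\<^sub>\<infinity>i. of_real (q i) * z ^ i) = suminf f" unfolding f_def by (rule infsumI)
  have nrz: "norm (of_real \<rho> * z) < 1"
    using r0 r1 nz by (simp add: norm_mult) (meson le_less_trans mult_left_le order_refl)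
  have G: "suminf g = (1 - of_real \<rho>) / (1 - of_real \<rho> * z)"
  proof -
    have "g = (\<lambda>n. (1 - of_real \<rho>) * (of_real \<rho> * z) ^ n)" by (simp add: fun_eq_iff g_def power_mult_distrib)
    hence "suminf g = (1 - of_real \<rho>) * (\<Sum>n. (of_real \<rho> * z) ^ n)"
      using nrz by (simp add: suminf_mult)
    also have "\<dots> = (1 - of_real \<rho>) / (1 - of_real \<rho> * z)" using suminf_geometric[OF nrz] by simp
    finally show ?thesis .
  qed
  show ?thesis unfolding L R G by simp
qed


lemma infsum_fin_support:
  fixes g :: "'a \<Rightarrow> real"
  assumes "finite F" "F \<subseteq> A" "\<And>x. x \<in> A \<Longrightarrow> x \<notin> F \<Longrightarrow> g x = 0"
  shows "infsum g A = sum g F"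
proof -
  have "infsum g A = infsum g F" by (rule infsum_cong_neutral) (use assms in auto)
  thus ?thesis using assms(1) by simp
qed

lemma rate_nonneg:
  assumes "0 \<le> lam" "0 \<le> mu" "0 \<le> alpha"
  shows "0 \<le> setup_rate c lam mu alpha s t"
  using assms unfolding setup_rate_def by (auto split: prod.splits)

lemma out_c:
  assumes "c \<ge> 1"
  shows "(\<Sum>\<^sub>\<infinity>u\<in>setup_states c - {(c, c+k)}. setup_rate c lam mu alpha (c, c+k) u) = lam + real c * mu"
proof (cases k)
  case 0
  have "(\<Sum>\<^sub>\<infinity>u\<in>setup_states c - {(c, c+k)}. setup_rate c lam mu alpha (c, c+k) u)
      = sum (setup_rate c lam mu alpha (c, c+k)) {(c, c+1), (c-1, c-1)}"
    by (rule infsum_fin_support) (use assms 0 in \<open>auto simp: setup_states_def setup_rate_def split: if_splits\<close>)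
  also have "\<dots> = lam + real c * mu" using assms 0 by (simp add: setup_rate_def)
  finally show ?thesis .
next
  case (Suc j)
  have "(\<Sum>\<^sub>\<infinity>u\<in>setup_states c - {(c, c+k)}. setup_rate c lam mu alpha (c, c+k) u)
      = sum (setup_rate c lam mu alpha (c, c+k)) {(c, c+k+1), (c, c+j)}"
    by (rule infsum_fin_support) (use assms Suc in \<open>auto simp: setup_states_def setup_rate_def split: if_splits\<close>)
  also have "\<dots> = lam + real c * mu" using assms Suc by (simp add: setup_rate_def)
  finally show ?thesis .
qed

lemma in_c0:
  assumes "c \<ge> 1"
  shows "(\<Sum>\<^sub>\<infinity>s\<in>setup_states c - {(c, c)}. st s * setup_rate c lam mu alpha s (c, c))
     = alpha * st (c - 1, c) + real c * mu * st (c, c + 1)"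
proof -
  have "(\<Sum>\<^sub>\<infinity>s\<in>setup_states c - {(c, c)}. st s * setup_rate c lam mu alpha s (c, c))
      = sum (\<lambda>s. st s * setup_rate c lam mu alpha s (c, c)) {(c-1, c), (c, c+1)}"
    by (rule infsum_fin_support) (use assms in \<open>auto simp: setup_states_def setup_rate_def split: if_splits\<close>)
  also have "\<dots> = alpha * st (c - 1, c) + real c * mu * st (c, c + 1)" using assms by (auto simp: setup_rate_def)
  finally show ?thesis .
qed

lemma in_cS:
  assumes "c \<ge> 1"
  shows "(\<Sum>\<^sub>\<infinity>s\<in>setup_states c - {(c, c + Suc k)}. st s * setup_rate c lam mu alpha s (c, c + Suc k))
     = lam * st (c, c + k) + alpha * st (c - 1, c + Suc k) + real c * mu * st (c, c + Suc k + 1)"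
proof -
  have "(\<Sum>\<^sub>\<infinity>s\<in>setup_states c - {(c, c + Suc k)}. st s * setup_rate c lam mu alpha s (c, c + Suc k))
      = sum (\<lambda>s. st s * setup_rate c lam mu alpha s (c, c + Suc k)) {(c, c+k), (c-1, c + Suc k), (c, c + Suc k + 1)}"
    by (rule infsum_fin_support) (use assms in \<open>auto simp: setup_states_def setup_rate_def split: if_splits\<close>)
  also have "\<dots> = lam * st (c, c + k) + alpha * st (c - 1, c + Suc k) + real c * mu * st (c, c + Suc k + 1)"
    using assms by (auto simp: setup_rate_def)
  finally show ?thesis .
qed

lemma rate_src:
  assumes "setup_rate c lam mu alpha s (i', j') \<noteq> 0"
  shows "s \<in> {(i', j' - 1), (i' - 1, j'), (i', j' + 1), (i' + 1, i' + 1)}"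
  using assms unfolding setup_rate_def by (auto split: prod.splits if_splits)

lemma pred_zero:
  assumes stat: "setup_stationary c lam mu alpha st"
    and pos: "0 \<le> lam" "0 \<le> mu" "0 \<le> alpha"
    and t: "t \<in> setup_states c" "st t = 0"
    and s: "s \<in> setup_states c" "s \<noteq> t" "setup_rate c lam mu alpha s t > 0"
  shows "st s = 0"
proof -
  obtain i' j' where tt: "t = (i', j')" by (cases t)
  let ?f = "\<lambda>s. st s * setup_rate c lam mu alpha s t"
  have "st t * (\<Sum>\<^sub>\<infinity>u\<in>setup_states c - {t}. setup_rate c lam mu alpha t u) = infsum ?f (setup_states c - {t})"
    using stat t unfolding setup_stationary_def by blast
  hence I: "infsum ?f (setup_states c - {t}) = 0" using t by simp
  have nn: "\<And>x. x \<in> setup_states c - {t} \<Longrightarrow> 0 \<le> ?f x"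
    using stat pos unfolding setup_stationary_def by (auto intro!: mult_nonneg_nonneg rate_nonneg)
  have "{x \<in> setup_states c - {t}. ?f x \<noteq> 0} \<subseteq> {(i', j' - 1), (i' - 1, j'), (i', j' + 1), (i' + 1, i' + 1)}"
    using rate_src[of c lam mu alpha _ i' j'] tt by auto
  hence "finite {x \<in> setup_states c - {t}. ?f x \<noteq> 0}" by (rule finite_subset) simp
  hence sm: "?f summable_on (setup_states c - {t})" by (rule finite_nonzero_values_imp_summable_on)
  have "?f s = 0" by (rule nonneg_infsum_le_0D[OF _ sm nn]) (use I s in auto)
  thus ?thesis using s by simp
qed

lemma all_zero:
  assumes stat: "setup_stationary c lam mu alpha st"
    and pos: "0 < lam" "0 < mu" "0 < alpha"
    and z: "\<And>k. st (c, c + k) = 0"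
  shows "False"
proof -
  have P: "\<And>s t. t \<in> setup_states c \<Longrightarrow> st t = 0 \<Longrightarrow> s \<in> setup_states c \<Longrightarrow> s \<noteq> t
      \<Longrightarrow> setup_rate c lam mu alpha s t > 0 \<Longrightarrow> st s = 0"
    using pred_zero[OF stat] pos by (meson less_imp_le)
  have Z: "d \<le> c \<Longrightarrow> \<forall>j\<ge>c - d. st (c - d, j) = 0" for d
  proof (induction d)
    case 0
    show ?case
    proof (intro allI impI)
      fix j assume "j \<ge> c - 0"
      then obtain k where "j = c + k" using le_Suc_ex by fastforce
      thus "st (c - 0, j) = 0" using z by simp
    qed
  next
    case (Suc d)
    define i where "i = c - Suc d"
    have ci: "c - d = i + 1" using Suc.prems unfolding i_def by linarith
    have ic: "i < c" using Suc.prems unfolding i_def by linarith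
    have IH: "\<forall>j\<ge>i + 1. st (i + 1, j) = 0" using Suc.IH Suc.prems ci by simp
    have up: "st (i, j) = 0" if "j \<ge> i + 1" for j
    proof (rule P[of "(i+1, j)"])
      show "(i + 1, j) \<in> setup_states c" using that ic by (simp add: setup_states_def)
      show "st (i + 1, j) = 0" using IH that by blast
      show "(i, j) \<in> setup_states c" using that ic by (simp add: setup_states_def)
      show "(i, j) \<noteq> (i + 1, j)" by simp
      have m1: "j - i \<ge> 1" "c - i \<ge> 1" using that ic by linarith+
      have "min (j - i) (c - i) \<ge> 1" using m1 by simp
      hence "real (min (j - i) (c - i)) > 0" by linarith
      hence "real (min (j - i) (c - i)) * alpha > 0" using pos(3) by (rule mult_pos_pos)
      moreover have "setup_rate c lam mu alpha (i, j) (i + 1, j) = real (min (j - i) (c - i)) * alpha"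
        using that ic unfolding setup_rate_def by simp
      ultimately show "setup_rate c lam mu alpha (i, j) (i + 1, j) > 0" by simp
    qed
    have ii: "st (i, i) = 0"
    proof (rule P[of "(i, i+1)"])
      show "(i, i + 1) \<in> setup_states c" using ic by (simp add: setup_states_def)
      show "st (i, i + 1) = 0" using up by simp
      show "(i, i) \<in> setup_states c" using ic by (simp add: setup_states_def)
      show "(i, i) \<noteq> (i, i + 1)" by simp
      have "setup_rate c lam mu alpha (i, i) (i, i + 1) = lam"
        using ic unfolding setup_rate_def by simp
      thus "setup_rate c lam mu alpha (i, i) (i, i + 1) > 0" using pos by simp
    qed
    show ?case
    proof (intro allI impI)
      fix j assume j: "j \<ge> c - Suc d"
      show "st (c - Suc d, j) = 0"
      proof (cases "j = i")
        case True thus ?thesis using ii by (simp add: i_def)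
      next
        case False thus ?thesis using up j unfolding i_def[symmetric] by simp
      qed
    qed
  qed
  have zero: "st s = 0" if "s \<in> setup_states c" for s
  proof -
    obtain i j where s: "s = (i, j)" by (cases s)
    have "i \<le> c" "i \<le> j" using that s by (auto simp: setup_states_def)
    moreover have "c - (c - i) = i" using \<open>i \<le> c\<close> by simp
    ultimately show ?thesis using Z[of "c - i"] s by simp
  qed
  have "(st has_sum 1) (setup_states c)" using stat by (simp add: setup_stationary_def)
  moreover have "(st has_sum 0) (setup_states c)"
  proof -
    have "((\<lambda>_. 0::real) has_sum 0) (setup_states c)" by (rule has_sum_0) simp
    thus ?thesis by (rule has_sum_cong[THEN iffD1, rotated]) (simp add: zero)
  qed
  ultimately have "(1::real) = 0" using has_sum_unique by blast
  thus False by simp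
qed


lemma infsum_from:
  fixes f :: "nat \<Rightarrow> real"
  assumes "\<And>k. k \<ge> n \<Longrightarrow> 0 \<le> f k" and "summable (\<lambda>m. f (m + n))"
  shows "(\<Sum>\<^sub>\<infinity>k\<in>{n..}. f k) = (\<Sum>m. f (m + n))"
proof -
  have im: "{n..} = (\<lambda>m. m + n) ` UNIV"
  proof (rule set_eqI, rule iffI)
    fix x assume "x \<in> {n..}"
    hence "x = (x - n) + n" by simp
    thus "x \<in> (\<lambda>m. m + n) ` UNIV" by (rule image_eqI) simp
  qed auto
  have "(\<Sum>\<^sub>\<infinity>k\<in>{n..}. f k) = infsum (f \<circ> (\<lambda>m. m + n)) UNIV"
    unfolding im by (rule infsum_reindex) (simp add: inj_on_def)
  also have "\<dots> = (\<Sum>m. f (m + n))"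
  proof (rule infsumI, rule sums_nonneg_imp_has_sum)
    show "(f \<circ> (\<lambda>m. m + n)) sums (\<Sum>m. f (m + n))"
      using summable_sums[OF assms(2)] by (simp add: o_def)
  qed (use assms in auto)
  finally show ?thesis .
qed

theorem mainTheorem3:
  fixes c :: nat and lam mu alpha :: real and st :: "nat \<times> nat \<Rightarrow> real"
  assumes "c \<ge> 1" and "lam > 0" and "mu > 0" and "alpha > 0"
    and "lam / (real c * mu) < 1"
    and "setup_stationary c lam mu alpha st"
  defines "PQ \<equiv> (\<lambda>k. st (c, c + k) / (\<Sum>\<^sub>\<infinity>j\<in>{c..}. st (c, j)))"
    and "p \<equiv> (\<lambda>i. (1 / (\<Sum>\<^sub>\<infinity>k\<in>{1::nat..}. real k * st (c - 1, c - 1 + k))) * (\<Sum>\<^sub>\<infinity>k\<in>{i + 1..}. st (c - 1, c - 1 + k)))"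
  shows "(\<forall>i. 0 \<le> p i) \<and> (p has_sum 1) UNIV
    \<and> (\<forall>z::complex. norm z \<le> 1 \<longrightarrow>
          (\<Sum>\<^sub>\<infinity>k. of_real (PQ k) * z ^ k)
            = (\<Sum>\<^sub>\<infinity>i. of_real (p i) * z ^ i) * (1 - of_real (lam / (real c * mu))) / (1 - of_real (lam / (real c * mu)) * z))
    \<and> (\<forall>k. PQ k = (\<Sum>n\<le>k. (1 - lam / (real c * mu)) * (lam / (real c * mu)) ^ n * p (k - n)))"
proof -
  let ?S = "setup_states c"
  define r where "r = real c * mu"
  have rp: "r > 0" using assms(1,3) by (simp add: r_def)
  have lr: "lam < r" using assms(5) rp by (simp add: r_def field_simps)
  note stat = assms(6)[unfolded setup_stationary_def]
  have nn: "\<And>s. s \<in> ?S \<Longrightarrow> 0 \<le> st s" using stat by blast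
  have hs: "(st has_sum 1) ?S" using stat by blast
  have bal: "\<And>t. t \<in> ?S \<Longrightarrow> st t * (\<Sum>\<^sub>\<infinity>u\<in>?S - {t}. setup_rate c lam mu alpha t u)
        = (\<Sum>\<^sub>\<infinity>s\<in>?S - {t}. st s * setup_rate c lam mu alpha s t)" using stat by blast
  define a where "a k = st (c, c + k)" for k
  define b where "b m = st (c - 1, c - 1 + m)" for m
  have a0: "0 \<le> a k" for k unfolding a_def by (rule nn) (simp add: setup_states_def)
  have b0: "0 \<le> b k" for k unfolding b_def by (rule nn) (simp add: setup_states_def)
  have sum_on: "st summable_on ?S" using hs by (auto simp: summable_on_def)
  have sa: "summable a"
  proof -
    have "st summable_on ((\<lambda>k. (c, c + k)) ` UNIV)"
      by (rule summable_on_subset_banach[OF sum_on]) (auto simp: setup_states_def)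
    hence "(st \<circ> (\<lambda>k. (c, c + k))) summable_on UNIV"
      by (subst summable_on_reindex[symmetric]) (auto simp: inj_on_def)
    hence "a summable_on UNIV" by (simp add: a_def[abs_def] o_def)
    thus ?thesis using a0 summable_on_UNIV_nonneg_real_iff by blast
  qed
  have sb: "summable b"
  proof -
    have "st summable_on ((\<lambda>k. (c - 1, c - 1 + k)) ` UNIV)"
      by (rule summable_on_subset_banach[OF sum_on]) (auto simp: setup_states_def)
    hence "(st \<circ> (\<lambda>k. (c - 1, c - 1 + k))) summable_on UNIV"
      by (subst summable_on_reindex[symmetric]) (auto simp: inj_on_def)
    hence "b summable_on UNIV" by (simp add: b_def[abs_def] o_def)
    thus ?thesis using b0 summable_on_UNIV_nonneg_real_iff by blast
  qed
  have c1: "c - 1 + 1 = c" "Suc (c - Suc 0) = c" using assms(1) by simp_all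
  have bal0: "(lam + r) * a 0 = alpha * b 1 + r * a 1"
  proof -
    have "st (c, c) * (\<Sum>\<^sub>\<infinity>u\<in>?S - {(c, c)}. setup_rate c lam mu alpha (c, c) u)
        = (\<Sum>\<^sub>\<infinity>s\<in>?S - {(c, c)}. st s * setup_rate c lam mu alpha s (c, c))"
      by (rule bal) (simp add: setup_states_def)
    moreover have "(\<Sum>\<^sub>\<infinity>u\<in>?S - {(c, c)}. setup_rate c lam mu alpha (c, c) u) = lam + r"
      using out_c[OF assms(1), where k=0 and lam=lam and mu=mu and alpha=alpha] by (simp add: r_def)
    ultimately show ?thesis using in_c0[OF assms(1), where st=st and lam=lam and mu=mu and alpha=alpha]
      by (simp add: a_def b_def c1 r_def algebra_simps)
  qed
  have balS: "(lam + r) * a (Suc k) = lam * a k + alpha * b (k+2) + r * a (k+2)" for k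
  proof -
    have E0: "st (c, c + Suc k) * (\<Sum>\<^sub>\<infinity>u\<in>?S - {(c, c + Suc k)}. setup_rate c lam mu alpha (c, c + Suc k) u)
        = (\<Sum>\<^sub>\<infinity>s\<in>?S - {(c, c + Suc k)}. st s * setup_rate c lam mu alpha s (c, c + Suc k))"
      by (rule bal) (simp add: setup_states_def)
    have E: "st (c, c + Suc k) * (lam + r) = lam * st (c, c + k) + alpha * st (c - 1, c + Suc k) + r * st (c, c + Suc k + 1)"
      using E0 unfolding out_c[OF assms(1), where k="Suc k" and lam=lam and mu=mu and alpha=alpha]
        in_cS[OF assms(1), where st=st and lam=lam and mu=mu and alpha=alpha and k=k] r_def .
    have ck: "c - 1 + (k + 2) = c + Suc k" using assms(1) by simp
    have bk: "b (k+2) = st (c - 1, c + Suc k)" unfolding b_def ck ..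
    have ak: "a (Suc k) = st (c, c + Suc k)" "a (k+2) = st (c, c + Suc k + 1)" "a k = st (c, c + k)"
      unfolding a_def by simp_all
    show ?thesis unfolding bk ak using E by (simp add: algebra_simps)
  qed
  have rec: "\<And>k. r * a k = (if k = 0 then 0 else lam * a (k - 1)) + alpha * (\<Sum>m. b (m + k + 1))"
    by (rule seq_D_zero[OF sa sb bal0 balS])
  have nz: "\<exists>k. a k \<noteq> 0"
  proof (rule ccontr)
    assume "\<not> (\<exists>k. a k \<noteq> 0)"
    hence "\<And>k. st (c, c + k) = 0" by (simp add: a_def)
    thus False by (rule all_zero[OF assms(6) assms(2,3,4)])
  qed
  define T where "T = (\<lambda>k. (\<Sum>m. b (m + k + 1)))"
  define M where "M = (\<Sum>m. real (m+1) * b (m+1))"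
  note SM = seq_main[OF a0 b0 sa sb assms(2) lr assms(4) rec nz, folded T_def M_def]
  have sT: "summable (\<lambda>m. b (m + k + 1))" for k
    using summable_ignore_initial_segment[OF sb, of "k+1"] by (simp add: add.assoc)
  have den: "(\<Sum>\<^sub>\<infinity>j\<in>{c..}. st (c, j)) = suminf a"
  proof -
    have "(\<Sum>\<^sub>\<infinity>j\<in>{c..}. st (c, j)) = (\<Sum>m. st (c, m + c))"
      by (rule infsum_from) (use nn sa in \<open>auto simp: setup_states_def a_def[abs_def] add.commute\<close>)
    thus ?thesis by (simp add: a_def[abs_def] add.commute)
  qed
  have PQe: "PQ k = a k / suminf a" for k unfolding PQ_def den by (simp add: a_def)
  have Te: "(\<Sum>\<^sub>\<infinity>k\<in>{i + 1..}. st (c - 1, c - 1 + k)) = T i" for i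
  proof -
    have "(\<Sum>\<^sub>\<infinity>k\<in>{i + 1..}. st (c - 1, c - 1 + k)) = (\<Sum>m. st (c - 1, c - 1 + (m + (i + 1))))"
      by (rule infsum_from) (use nn sT[of i] in \<open>auto simp: setup_states_def b_def[abs_def] add.assoc\<close>)
    thus ?thesis by (simp add: T_def b_def add.assoc)
  qed
  have Me: "(\<Sum>\<^sub>\<infinity>k\<in>{1::nat..}. real k * st (c - 1, c - 1 + k)) = M"
  proof -
    have "(\<Sum>\<^sub>\<infinity>k\<in>{1::nat..}. real k * st (c - 1, c - 1 + k)) = (\<Sum>m. real (m + 1) * st (c - 1, c - 1 + (m + 1)))"
      by (rule infsum_from) (use nn SM(1) in \<open>auto simp: setup_states_def b_def[abs_def]\<close>)
    thus ?thesis by (simp add: M_def b_def)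
  qed
  have pe: "p i = T i / M" for i unfolding p_def Te Me by simp
  have T0: "T i \<ge> 0" for i unfolding T_def by (rule suminf_nonneg[OF sT]) (simp add: b0)
  have p0: "\<forall>i. 0 \<le> p i" using T0 SM(2) by (simp add: pe)
  have psum: "p sums 1" using SM(3) by (simp add: pe[abs_def] T_def)
  have phs: "(p has_sum 1) UNIV" by (rule sums_nonneg_imp_has_sum[OF psum]) (use p0 in auto)
  have coef: "\<forall>k. PQ k = (\<Sum>n\<le>k. (1 - lam / (real c * mu)) * (lam / (real c * mu)) ^ n * p (k - n))"
    using SM(4) by (simp add: PQe pe r_def T_def)
  have rho0: "0 \<le> lam / (real c * mu)" using assms(2) rp by (simp add: r_def)
  have gf: "\<forall>z::complex. norm z \<le> 1 \<longrightarrow>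
          (\<Sum>\<^sub>\<infinity>k. of_real (PQ k) * z ^ k)
            = (\<Sum>\<^sub>\<infinity>i. of_real (p i) * z ^ i) * (1 - of_real (lam / (real c * mu))) / (1 - of_real (lam / (real c * mu)) * z)"
  proof (intro allI impI)
    fix z :: complex assume "norm z \<le> 1"
    show "(\<Sum>\<^sub>\<infinity>k. of_real (PQ k) * z ^ k)
            = (\<Sum>\<^sub>\<infinity>i. of_real (p i) * z ^ i) * (1 - of_real (lam / (real c * mu))) / (1 - of_real (lam / (real c * mu)) * z)"
      by (rule genfun[OF rho0 assms(5) \<open>norm z \<le> 1\<close>]) (use p0 psum coef in \<open>auto simp: sums_iff\<close>)
  qed
  show ?thesis using p0 phs gf coef by blast
qed

end
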